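(* Assume the standing hypotheses, let $\sigma\in(0,1)$, $C_1>0$, $\gamma\in[0,2)$ and $C_8>0$. Then there exist $\rho>0$ and $\bar\mu\in(0,\hat\mu]$ such that the following holds for all $\mu\in(0,\bar\mu]$ and all $(x,\lambda)\in\mathcal B((x^*,\lambda^* ),\delta)$ with $x>0,\lambda>0$, $\|(x,\lambda)-(x^\mu,\lambda^\mu)\|<\rho$, $\|F_\mu(x,\lambda)\|\le C_1\mu$ and $\|(\Delta x_{\mathcal A}^N,\Delta\lambda_{\mathcal I}^N)\|\ge C_8\mu^\gamma$, where $(\Delta x^N,\Delta\lambda^N)$ is the Newton direction for $\mu^+=\sigma\mu$. Define $(\Delta x,\Delta\lambda)$ by: for $i\in\mathcal A$, $\Delta x_i\in\{\Delta x_i^S,\Delta x_i^C\}$ (chosen arbitrarily per index) and $\Delta\lambda_i=0$; for $i\in\mathcal I$, $\Delta x_i=0$ and $\Delta\lambda_i=\Delta\lambda_i^C$. With $(x_+^N,\lambda_+^N)=(x,\lambda)+(\Delta x^N,\Delta\lambda^N)$ and $(x_+,\lambda_+)=(x,\lambda)+(\Delta x,\Delta\lambda)$, $$\|(x_+^N,\lambda_+^N)-(x_+,\lambda_+)\|\le\|(x_+^N,\lambda_+^N)-(x,\lambda)\|.$$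
   Context: Problem: minimize $f(x)$ subject to $x\ge0$, $f:\mathbb R^n\to\mathbb R$ twice continuously differentiable with locally Lipschitz Hessian. Norms Euclidean; $e$ all-ones; $X=\mathrm{diag}(x)$, $\Lambda=\mathrm{diag}(\lambda)$; $F_\mu(x,\lambda)=\begin{bmatrix}\nabla f(x)-\lambda\\ \Lambda Xe-\mu e\end{bmatrix}$, $F'(x,\lambda)=\begin{bmatrix}\nabla^2f(x)&-I\\ \Lambda&X\end{bmatrix}$. The Newton direction for $\mu^+=\sigma\mu$ solves $F'(x,\lambda)(\Delta x^N,\Delta\lambda^N)=-F_{\mu^+}(x,\lambda)$. Approximations: $\Delta x_i^S=-\frac{x_i[\nabla f(x)]_i-\mu^+}{x_i[\nabla^2f(x)]_{ii}+\lambda_i}$, $\Delta x_i^C=-x_i+\mu^+/\lambda_i$, $\Delta\lambda_i^C=-\lambda_i+\mu^+/x_i$. Standing hypotheses: $(x^*,\lambda^* )$ satisfies $\nabla f(x^* )=\lambda^*$, $x^*\ge0$, $\lambda^*\ge0$, $x_i^*\lambda_i^*=0$, $x^*+\lambda^*>0$, $[\nabla^2f(x^* )]_{\mathcal I\mathcal I}\succ0$, where $\mathcal A=\{i:x^*_i=0\}$, $\mathcal I=\{i:x_i^*>0\}$; subscripts $\mathcal A,\mathcal I$ denote sub-vectors. $\delta>0$: $F'$ nonsingular on $\mathcal B((x^*,\lambda^* ),\delta)$ with $\|F'^{-1}\|\le M$; $\hat\mu>0$: for $\mu\in(0,\hat\mu]$ a Lipschitz barrier trajectory $(x^\mu,\lambda^\mu)\in\mathcal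 B((x^*,\lambda^* ),\delta)$ with $F_\mu(x^\mu,\lambda^\mu)=0$, $\|(x^\mu,\lambda^\mu)-(x^*,\lambda^* )\|\le C_4\mu$ exists. *)

theory Defs
  imports "HOL-Analysis.Analysis"
begin

text \<open>Primal-dual pairs (x, lambda)
 live in (real^'n) \<times> (real^'n), whose norm is the Euclidean norm of the stacked vector.\<close>

definition Fmu :: "real \<Rightarrow> (real^'n \<Rightarrow> real^'n) \<Rightarrow> real^'n \<Rightarrow> real^'n \<Rightarrow> (real^'n) \<times> (real^'n)" where
  "Fmu mu grad x l = (grad x - l, (\<chi> i. l$i * x$i - mu))"

definition Fprime :: "(real^'n \<Rightarrow> real^'n^'n) \<Rightarrow> real^'n \<Rightarrow> real^'n
    \<Rightarrow> (real^'n) \<times> (real^'n) \<Rightarrow> (real^'n) \<times> (real^'n)" where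
  "Fprime hess x l = (\<lambda>(dx, dl). (hess x *v dx - dl, (\<chi> i. l$i * dx$i + x$i * dl$i)))"

definition dxS :: "(real^'n \<Rightarrow> real^'n) \<Rightarrow> (real^'n \<Rightarrow> real^'n^'n) \<Rightarrow> real
    \<Rightarrow> real^'n \<Rightarrow> real^'n \<Rightarrow> 'n \<Rightarrow> real" where
  "dxS grad hess mup x l i = - (x$i * grad x $ i - mup) / (x$i * hess x $ i $ i + l$i)"

definition dxC :: "real \<Rightarrow> real^'n \<Rightarrow> real^'n \<Rightarrow> 'n \<Rightarrow> real" where
  "dxC mup x l i = - x$i + mup / l$i"

definition dlC :: "real \<Rightarrow> real^'n \<Rightarrow> real^'n \<Rightarrow> 'n \<Rightarrow> real" where
  "dlC mup x l i = - l$i + mup / x$i"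

end

theory Submission
  imports Defs
begin
lemma Fprime_linear: "linear (Fprime hess (x::real^'n) l)"
proof (rule linearI)
  fix a b :: "(real^'n) \<times> (real^'n)" and c :: real
  show "Fprime hess x l (a + b) = Fprime hess x l a + Fprime hess x l b"
    by (cases a; cases b) (simp add: Fprime_def vec_eq_iff matrix_vector_right_distrib algebra_simps)
  show "Fprime hess x l (c *\<^sub>R a) = c *\<^sub>R Fprime hess x l a"
    by (cases a) (simp add: Fprime_def vec_eq_iff matrix_vector_mult_scaleR algebra_simps)
qed
lemma Fprime_dir_bound:
  fixes x :: "real^'n" assumes "bij (Fprime hess x l)" "onorm (inv (Fprime hess x l)) \<le> M"
    "Fprime hess x l d = y"
  shows "norm d \<le> \<bar>M\<bar> * norm y"
proof -
  let ?F = "Fprime hess x l"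
  have bl: "bounded_linear ?F" using Fprime_linear linear_conv_bounded_linear by blast
  have inj: "inj ?F" using assms(1) bij_is_inj by blast
  have bli: "bounded_linear (inv ?F)" using inj_linear_imp_inv_bounded_linear[OF bl inj] .
  have "d = inv ?F y" using inj assms(3) by (metis inv_f_f)
  hence "norm d \<le> onorm (inv ?F) * norm y" using onorm[OF bli] by simp
  also have "\<dots> \<le> \<bar>M\<bar> * norm y" using assms(2) by (intro mult_right_mono) auto
  finally show ?thesis .
qed

lemma norm_pair_sq: "(norm ((p::real^'n), (q::real^'n)))\<^sup>2 = (\<Sum>i\<in>UNIV. (p$i)\<^sup>2) + (\<Sum>i\<in>UNIV. (q$i)\<^sup>2)"
proof -
  have a: "(norm (p, q))\<^sup>2 = (norm p)\<^sup>2 + (norm q)\<^sup>2" by (simp add: norm_Pair)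
  have b: "\<And>v::real^'n. (norm v)\<^sup>2 = (\<Sum>i\<in>UNIV. (v$i)\<^sup>2)"
    unfolding power2_norm_eq_inner inner_vec_def by (simp add: power2_eq_square)
  show ?thesis unfolding a b ..
qed

lemma norm_const_vec: "norm ((\<chi> i. c)::real^'n) \<le> real CARD('n) * \<bar>c\<bar>"
  using norm_le_l1_cart[of "(\<chi> i. c)::real^'n"] by simp

lemma errS:
  fixes x h l g hv dl dN s nd Hb c0 :: real
  assumes den: "x*h + l \<ge> c0/4" and c0: "c0 > 0" and x: "x \<ge> 0"
    and e1: "hv - dl = l - g" and e2: "l*dN + x*dl = s - l*x"
    and b1: "\<bar>hv\<bar> \<le> Hb*nd" and b2: "\<bar>h\<bar> \<le> Hb" and b3: "\<bar>dN\<bar> \<le> nd"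
  shows "\<bar>- (x*g - s)/(x*h + l) - dN\<bar> \<le> 8*Hb*x*nd/c0"
proof -
  have dp: "x*h + l > 0" using den c0 by linarith
  have eq: "- (x*g - s)/(x*h + l) - dN = x*(hv - h*dN)/(x*h+l)"
  proof -
    have g: "g = l - hv + dl" using e1 by linarith
    have ldn: "l*dN = s - l*x - x*dl" using e2 by linarith
    have q: "(x*h+l) * (- (x*g - s)/(x*h + l)) = s - x*g" using dp by simp
    have "(x*h+l) * (- (x*g - s)/(x*h + l) - dN) = x*(hv - h*dN)"
      unfolding right_diff_distrib q using ldn unfolding g by (simp add: algebra_simps)
    moreover have "- (x*g - s)/(x*h + l) - dN = ((x*h+l) * (- (x*g - s)/(x*h + l) - dN))/(x*h+l)"
      using dp by simp
    ultimately show ?thesis by simp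
  qed
  have nd: "nd \<ge> 0" using b3 by linarith
  have "\<bar>hv - h*dN\<bar> \<le> Hb*nd + Hb*nd"
  proof -
    have "\<bar>h*dN\<bar> \<le> Hb*nd" unfolding abs_mult using b2 b3 by (intro mult_mono) auto
    thus ?thesis using b1 by linarith
  qed
  hence num: "\<bar>x*(hv - h*dN)\<bar> \<le> x*(2*Hb*nd)" using x by (simp add: abs_mult mult_left_mono)
  have "\<bar>x*(hv - h*dN)/(x*h+l)\<bar> = \<bar>x*(hv - h*dN)\<bar>/(x*h+l)" using dp by simp
  also have "\<dots> \<le> (x*(2*Hb*nd))/(c0/4)"
  proof -
    have "0 \<le> Hb" using b2 by linarith
    hence "0 \<le> x*(2*Hb*nd)" using x nd by simp
    thus ?thesis using num den dp c0 by (intro frac_le) auto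
  qed
  also have "\<dots> = 8*Hb*x*nd/c0" by (simp add: field_simps)
  finally show ?thesis using eq by simp
qed

lemma errC:
  fixes x l dl dN s nd c0 :: real
  assumes l: "l \<ge> c0/2" and c0: "c0 > 0" and x: "x \<ge> 0"
    and e2: "l*dN + x*dl = s - l*x" and b3: "\<bar>dl\<bar> \<le> nd"
  shows "\<bar>(- x + s/l) - dN\<bar> \<le> 2*x*nd/c0"
proof -
  have lp: "l > 0" using l c0 by linarith
  have eq: "(- x + s/l) - dN = x*dl/l" using lp e2 by (simp add: field_simps)
  have "\<bar>x*dl\<bar> = x*\<bar>dl\<bar>" using x by (simp add: abs_mult)
  also have "\<dots> \<le> x*nd" using x b3 by (intro mult_left_mono) auto
  finally have "\<bar>x*dl\<bar> \<le> x*nd" .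
  hence "\<bar>x*dl/l\<bar> \<le> x*nd/(c0/2)"
  proof -
    assume h: "\<bar>x*dl\<bar> \<le> x*nd"
    have "\<bar>x*dl/l\<bar> = \<bar>x*dl\<bar>/l" using lp by simp
    also have "\<dots> \<le> x*nd/l" using h lp by (simp add: divide_right_mono)
    also have "\<dots> \<le> x*nd/(c0/2)" using l c0 x b3 by (intro divide_left_mono) auto
    finally show ?thesis .
  qed
  thus ?thesis using eq by (simp add: field_simps)
qed


lemma norm_vec_bound: assumes "\<And>i. \<bar>v$i\<bar> \<le> b" shows "norm (v::real^'n) \<le> real CARD('n) * b"
proof -
  have "norm v \<le> (\<Sum>i\<in>UNIV. \<bar>v$i\<bar>)" by (rule norm_le_l1_cart)
  also have "\<dots> \<le> of_nat (card (UNIV::'n set)) * b" using assms by (intro sum_bounded_above) auto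
  finally show ?thesis by simp
qed

lemma final_norm:
  fixes xs dxN dlN dx dl :: "real^'n"
  assumes part: "\<And>i. xs$i = 0 \<or> xs$i > 0"
    and A: "\<And>i. xs$i = 0 \<Longrightarrow> dl$i = 0" and I: "\<And>i. xs$i > 0 \<Longrightarrow> dx$i = 0"
    and le: "norm ((\<chi> i. if xs$i = 0 then dxN$i - dx$i else 0, \<chi> i. if xs$i > 0 then dlN$i - dl$i else 0)
               :: (real^'n) \<times> (real^'n))
          \<le> norm ((\<chi> i. if xs$i = 0 then dxN$i else 0, \<chi> i. if xs$i > 0 then dlN$i else 0)
               :: (real^'n) \<times> (real^'n))"
  shows "norm (dxN - dx, dlN - dl) \<le> norm (dxN, dlN)"
proof -
  define e1 :: "real^'n" where "e1 = (\<chi> i. if xs$i = 0 then dxN$i - dx$i else 0)"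
  define e2 :: "real^'n" where "e2 = (\<chi> i. if xs$i > 0 then dlN$i - dl$i else 0)"
  define a1 :: "real^'n" where "a1 = (\<chi> i. if xs$i = 0 then dxN$i else 0)"
  define a2 :: "real^'n" where "a2 = (\<chi> i. if xs$i > 0 then dlN$i else 0)"
  have p1: "((dxN - dx)$i)\<^sup>2 = (dxN$i)\<^sup>2 - (a1$i)\<^sup>2 + (e1$i)\<^sup>2" for i
    using part[of i] I[of i] unfolding a1_def e1_def by auto
  have p2: "((dlN - dl)$i)\<^sup>2 = (dlN$i)\<^sup>2 - (a2$i)\<^sup>2 + (e2$i)\<^sup>2" for i
    using part[of i] A[of i] unfolding a2_def e2_def by auto
  have "(norm (dxN - dx, dlN - dl))\<^sup>2 = (norm (dxN, dlN))\<^sup>2 - (norm (a1, a2))\<^sup>2 + (norm (e1, e2))\<^sup>2"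
    unfolding norm_pair_sq p1 p2 by (simp add: sum.distrib sum_subtractf)
  also have "\<dots> \<le> (norm (dxN, dlN))\<^sup>2"
    using le unfolding e1_def e2_def a1_def a2_def[symmetric]
    by (simp add: a1_def a2_def power_mono)
  finally show ?thesis by (rule power2_le_imp_le) simp
qed


theorem proposition3:
  fixes f :: "real^'n \<Rightarrow> real"
    and grad :: "real^'n \<Rightarrow> real^'n"
    and hess :: "real^'n \<Rightarrow> real^'n^'n"
    and xs ls :: "real^'n"
    and delta M muhat C4 :: real
    and traj :: "real \<Rightarrow> (real^'n) \<times> (real^'n)"
    and sigma C1 gamma C8 :: real
  assumes grad: "\<And>x. (f has_derivative (\<lambda>h. grad x \<bullet> h)) (at x)"
    and hess: "\<And>x. (grad has_derivative (\<lambda>h. hess x *v h)) (at x)"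
    and hess_cont: "continuous_on UNIV hess"
    and hess_loclip: "\<And>x. \<exists>e>0. \<exists>L. L-lipschitz_on (cball x e) hess"
    and kkt_grad: "grad xs = ls"
    and xs_nonneg: "\<And>i. xs$i \<ge> 0"
    and ls_nonneg: "\<And>i. ls$i \<ge> 0"
    and compl: "\<And>i. xs$i * ls$i = 0"
    and strict_compl: "\<And>i. xs$i + ls$i > 0"
    and hessII_pd: "\<And>v. v \<noteq> 0 \<Longrightarrow> (\<forall>i. xs$i = 0 \<longrightarrow> v$i = 0) \<Longrightarrow> v \<bullet> (hess xs *v v) > 0"
    and delta_pos: "delta > 0"
    and Fprime_nonsing: "\<And>x l. (x, l) \<in> cball (xs, ls) delta \<Longrightarrow>
           bij (Fprime hess x l) \<and> onorm (inv (Fprime hess x l)) \<le> M"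
    and muhat_pos: "muhat > 0"
    and traj_lip: "\<exists>L. L-lipschitz_on {0<..muhat} traj"
    and traj_ball: "\<And>mu. mu \<in> {0<..muhat} \<Longrightarrow> traj mu \<in> cball (xs, ls) delta"
    and traj_zero: "\<And>mu. mu \<in> {0<..muhat} \<Longrightarrow> Fmu mu grad (fst (traj mu)) (snd (traj mu)) = 0"
    and traj_dist: "\<And>mu. mu \<in> {0<..muhat} \<Longrightarrow> norm (traj mu - (xs, ls)) \<le> C4 * mu"
    and sigma: "0 < sigma" "sigma < 1"
    and C1: "C1 > 0"
    and gamma: "0 \<le> gamma" "gamma < 2"
    and C8: "C8 > 0"
  shows "\<exists>rho>0. \<exists>mubar. 0 < mubar \<and> mubar \<le> muhat \<and>
     (\<forall>mu x l dxN dlN dx dl.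
        0 < mu \<and> mu \<le> mubar
        \<and> (x, l) \<in> cball (xs, ls) delta
        \<and> (\<forall>i. x$i > 0) \<and> (\<forall>i. l$i > 0)
        \<and> norm ((x, l) - traj mu) < rho
        \<and> norm (Fmu mu grad x l) \<le> C1 * mu
        \<and> Fprime hess x l (dxN, dlN) = - Fmu (sigma * mu) grad x l
        \<and> norm ((\<chi> i. if xs$i = 0 then dxN$i else 0, \<chi> i. if xs$i > 0 then dlN$i else 0)
               :: (real^'n) \<times> (real^'n)) \<ge> C8 * mu powr gamma
        \<and> (\<forall>i. xs$i = 0 \<longrightarrow> (dx$i = dxS grad hess (sigma * mu) x l i
                                \<or> dx$i = dxC (sigma * mu) x l i) \<and> dl$i = 0)
        \<and> (\<forall>i. xs$i > 0 \<longrightarrow> dx$i = 0 \<and> dl$i = dlC (sigma * mu) x l i)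
      \<longrightarrow> norm ((x + dxN, l + dlN) - (x + dx, l + dl))
            \<le> norm ((x + dxN, l + dlN) - (x, l)))"
proof -
  let ?N = "real CARD('n)"
  define c0 where "c0 = Min (range (\<lambda>i. xs$i + ls$i))"
  have c0pos: "c0 > 0" unfolding c0_def using strict_compl by simp
  have c0le: "c0 \<le> xs$i + ls$i" for i unfolding c0_def by (rule Min_le) auto
  have part: "xs$i = 0 \<or> xs$i > 0" for i using xs_nonneg[of i] by linarith
  have Als: "ls$i \<ge> c0" if "xs$i = 0" for i using c0le[of i] that by simp
  have Ixs: "xs$i \<ge> c0 \<and> ls$i = 0" if "xs$i > 0" for i using c0le[of i] compl[of i] that by simp
  obtain r1 where r1: "r1 > 0" "\<And>y. dist y xs < r1 \<Longrightarrow> dist (hess y) (hess xs) < 1"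
    using hess_cont unfolding continuous_on_iff by (metis UNIV_I zero_less_one)
  define Hb where "Hb = norm (hess xs) + 1"
  have Hb1: "Hb \<ge> 1" unfolding Hb_def by simp
  have Hbnd: "norm (hess y) \<le> Hb" if "dist y xs < r1" for y
  proof -
    have "norm (hess y) - norm (hess xs) \<le> norm (hess y - hess xs)" by (rule norm_triangle_ineq2)
    thus ?thesis using r1(2)[OF that] unfolding Hb_def dist_norm by linarith
  qed
  define D where "D = C1 + ?N"
  have Dpos: "D > 0" unfolding D_def using C1 by simp
  define Nn where "Nn = \<bar>M\<bar> * D"
  have Nn0: "Nn \<ge> 0" unfolding Nn_def using Dpos by simp
  define B where "B = 2*(1+C1)/c0"
  have Bpos: "B > 0" unfolding B_def using C1 c0pos by simp
  define K where "K = (8*Hb+2)*B*Nn/c0"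
  have K0: "K \<ge> 0" unfolding K_def using Hb1 Bpos Nn0 c0pos by simp
  define Q where "Q = 2*?N*K"
  have Q0: "Q \<ge> 0" unfolding Q_def using K0 by simp
  define mubar where "mubar = min muhat (min (c0/(4*(\<bar>C4\<bar>+1))) (min (r1/(2*(\<bar>C4\<bar>+1)))
      (min (c0/(4*B*(Hb+1))) ((C8/(Q+1)) powr (1/(2-gamma))))))"
  define rho where "rho = min (c0/4) (r1/2)"
  have rho_pos: "rho > 0" unfolding rho_def using c0pos r1 by simp
  have mubar_pos: "mubar > 0" unfolding mubar_def using muhat_pos c0pos r1 Bpos Hb1 C8 Q0
    by (simp add: powr_gt_zero)
  have mubar_le: "mubar \<le> muhat" unfolding mubar_def by simp
  have key: "norm ((x + dxN, l + dlN) - (x + dx, l + dl)) \<le> norm ((x + dxN, l + dlN) - (x, l))"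
    if mu: "0 < mu" "mu \<le> mubar" and xl: "(x, l) \<in> cball (xs, ls) delta"
      and xp: "\<forall>i. x$i > 0" and lp: "\<forall>i. l$i > 0"
      and near: "norm ((x, l) - traj mu) < rho"
      and Fb: "norm (Fmu mu grad x l) \<le> C1 * mu"
      and Newt: "Fprime hess x l (dxN, dlN) = - Fmu (sigma * mu) grad x l"
      and big: "norm ((\<chi> i. if xs$i = 0 then dxN$i else 0, \<chi> i. if xs$i > 0 then dlN$i else 0)
               :: (real^'n) \<times> (real^'n)) \<ge> C8 * mu powr gamma"
      and dA: "\<forall>i. xs$i = 0 \<longrightarrow> (dx$i = dxS grad hess (sigma * mu) x l i
                                \<or> dx$i = dxC (sigma * mu) x l i) \<and> dl$i = 0"
      and dI: "\<forall>i. xs$i > 0 \<longrightarrow> dx$i = 0 \<and> dl$i = dlC (sigma * mu) x l i"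
    for mu x l dxN dlN dx dl
  proof -
    have muin: "mu \<in> {0<..muhat}" using mu mubar_le by simp
    have m1: "(\<bar>C4\<bar>+1)*mu \<le> c0/4"
    proof -
      have "mu \<le> c0/(4*(\<bar>C4\<bar>+1))" using mu unfolding mubar_def by simp
      thus ?thesis by (simp add: field_simps)
    qed
    have m2: "(\<bar>C4\<bar>+1)*mu \<le> r1/2"
    proof -
      have "mu \<le> r1/(2*(\<bar>C4\<bar>+1))" using mu unfolding mubar_def by simp
      thus ?thesis by (simp add: field_simps)
    qed
    have m3: "mu*B*Hb \<le> c0/4"
    proof -
      have "mu \<le> c0/(4*B*(Hb+1))" using mu unfolding mubar_def by simp
      moreover have "4*B*(Hb+1) > 0" using Bpos Hb1 by simp
      ultimately have "mu*(4*B*(Hb+1)) \<le> c0" by (simp add: pos_le_divide_eq)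
      hence "mu*(B*(Hb+1)) \<le> c0/4" by simp
      moreover have "mu*B*Hb \<le> mu*(B*(Hb+1))" using mu Bpos by simp
      ultimately show ?thesis by linarith
    qed
    have C4mu: "\<bar>C4\<bar>*mu \<le> (\<bar>C4\<bar>+1)*mu" using mu by simp
    have "norm ((x, l) - (xs, ls)) \<le> norm ((x, l) - traj mu) + norm (traj mu - (xs, ls))"
      using norm_triangle_ineq[of "(x, l) - traj mu" "traj mu - (xs, ls)"] by simp
    also have "\<dots> < rho + C4*mu" using near traj_dist[OF muin] by linarith
    also have "\<dots> \<le> rho + \<bar>C4\<bar>*mu" using mu by (simp add: mult_right_mono)
    finally have dd: "norm (x - xs, l - ls) < rho + \<bar>C4\<bar>*mu" by simp
    have dd1: "norm (x - xs, l - ls) < c0/2" using dd m1 C4mu unfolding rho_def by linarith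
    have dd2: "norm (x - xs, l - ls) < r1" using dd m2 C4mu unfolding rho_def by linarith
    have lcomp: "\<bar>l$i - ls$i\<bar> < c0/2" for i
      using component_le_norm_cart[of "l - ls" i] norm_snd_le[of "l - ls" "x - xs"] dd1 by simp
    have xcomp: "\<bar>x$i - xs$i\<bar> < c0/2" for i
      using component_le_norm_cart[of "x - xs" i] norm_fst_le[of "x - xs" "l - ls"] dd1 by simp
    have dxs: "dist x xs < r1" using norm_fst_le[of "x - xs" "l - ls"] dd2 by (simp add: dist_norm)
    have HB: "norm (hess x) \<le> Hb" using Hbnd[OF dxs] .
    have Fc: "\<bar>l$i*x$i - mu\<bar> \<le> C1*mu" for i
    proof -
      have "\<bar>(snd (Fmu mu grad x l))$i\<bar> \<le> norm (snd (Fmu mu grad x l))" by (rule component_le_norm_cart)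
      also have "\<dots> \<le> norm (Fmu mu grad x l)" by (cases "Fmu mu grad x l") (simp add: norm_snd_le)
      finally show ?thesis using Fb by (simp add: Fmu_def)
    qed
    have E1: "(hess x *v dxN)$i - dlN$i = l$i - grad x $ i" for i
      using arg_cong[OF Newt, of "\<lambda>p. fst p $ i"] by (simp add: Fprime_def Fmu_def)
    have E2: "l$i*dxN$i + x$i*dlN$i = sigma*mu - l$i*x$i" for i
      using arg_cong[OF Newt, of "\<lambda>p. snd p $ i"] by (simp add: Fprime_def Fmu_def)
    define nd where "nd = norm (dxN, dlN)"
    have nd0: "nd \<ge> 0" unfolding nd_def by simp
    have ndb: "nd \<le> Nn*mu"
    proof -
      have xlb: "(x, l) \<in> cball (xs, ls) delta" using xl .
      have FsB: "norm (Fmu (sigma*mu) grad x l) \<le> D*mu"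
      proof -
        have eq: "Fmu (sigma*mu) grad x l = Fmu mu grad x l + (0, \<chi> i. (1-sigma)*mu)"
          by (simp add: Fmu_def vec_eq_iff algebra_simps)
        have "norm (Fmu (sigma*mu) grad x l) \<le> norm (Fmu mu grad x l) + norm ((0::real^'n), (\<chi> i. (1-sigma)*mu)::real^'n)"
          unfolding eq by (rule norm_triangle_ineq)
        also have "norm ((0::real^'n), (\<chi> i. (1-sigma)*mu)::real^'n) = norm ((\<chi> i. (1-sigma)*mu)::real^'n)"
          by (simp add: norm_Pair)
        also have "\<dots> \<le> ?N * \<bar>(1-sigma)*mu\<bar>" by (rule norm_const_vec)
        also have "\<bar>(1-sigma)*mu\<bar> \<le> mu" using sigma mu by (simp add: abs_mult)
        hence "?N * \<bar>(1-sigma)*mu\<bar> \<le> ?N * mu" by (simp add: mult_left_mono)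
        finally show ?thesis using Fb unfolding D_def by (simp add: algebra_simps)
      qed
      have "nd \<le> \<bar>M\<bar> * norm (- Fmu (sigma * mu) grad x l)" unfolding nd_def
        using Fprime_nonsing[OF xlb] Newt by (intro Fprime_dir_bound) auto
      also have "\<dots> \<le> \<bar>M\<bar> * (D*mu)" using FsB by (simp add: mult_left_mono)
      finally show ?thesis unfolding Nn_def by (simp add: algebra_simps)
    qed
    have dxNb: "\<bar>dxN$i\<bar> \<le> nd" for i
      using component_le_norm_cart[of dxN i] norm_fst_le[of dxN dlN] unfolding nd_def by linarith
    have dlNb: "\<bar>dlN$i\<bar> \<le> nd" for i
      using component_le_norm_cart[of dlN i] norm_snd_le[of dlN dxN] unfolding nd_def by linarith
    have hrow: "norm (hess x $ i) \<le> Hb" for i using Finite_Cartesian_Product.norm_nth_le[of "hess x" i] HB by linarith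
    have hvb: "\<bar>(hess x *v dxN)$i\<bar> \<le> Hb*nd" for i
    proof -
      have "\<bar>(hess x *v dxN)$i\<bar> \<le> norm (hess x $ i) * norm dxN"
        unfolding matrix_vector_mul_component by (rule Cauchy_Schwarz_ineq2)
      also have "\<dots> \<le> Hb * nd" using Hb1 hrow[of i] norm_fst_le[of dxN dlN] unfolding nd_def
        by (intro mult_mono) auto
      finally show ?thesis .
    qed
    have hb: "\<bar>hess x $ i $ i\<bar> \<le> Hb" for i
      using component_le_norm_cart[of "hess x $ i" i] hrow[of i] by linarith
    have gen: "(8*Hb+2)*y*nd/c0 \<le> K*mu\<^sup>2" if "0 \<le> y" "y \<le> B*mu" for y
    proof -
      have "(8*Hb+2)*y*nd \<le> (8*Hb+2)*(B*mu)*(Nn*mu)"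
        using that nd0 ndb Hb1 by (intro mult_mono) auto
      hence "(8*Hb+2)*y*nd/c0 \<le> (8*Hb+2)*(B*mu)*(Nn*mu)/c0" using c0pos by (simp add: divide_right_mono)
      also have "\<dots> = K*mu\<^sup>2" unfolding K_def by (simp add: power2_eq_square field_simps)
      finally show ?thesis .
    qed
    have smallb: "y*c0 \<le> 2*(1+C1)*mu \<Longrightarrow> y \<le> B*mu" for y
      unfolding B_def using c0pos by (simp add: field_simps)
    define e1 :: "real^'n" where "e1 = (\<chi> i. if xs$i = 0 then dxN$i - dx$i else 0)"
    define e2 :: "real^'n" where "e2 = (\<chi> i. if xs$i > 0 then dlN$i - dl$i else 0)"
    have Kmu0: "K*mu\<^sup>2 \<ge> 0" using K0 by simp
    have e1b: "\<bar>e1$i\<bar> \<le> K*mu\<^sup>2" for i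
    proof (cases "xs$i = 0")
      case False thus ?thesis unfolding e1_def using Kmu0 by simp
    next
      case True
      have li: "l$i \<ge> c0/2" using Als[OF True] lcomp[of i] by linarith
      have xi: "x$i \<ge> 0" using xp by (simp add: less_imp_le)
      have "x$i * c0 \<le> 2*(1+C1)*mu"
      proof -
        have "x$i*(c0/2) \<le> x$i*l$i" using xi li by (intro mult_left_mono) auto
        also have "\<dots> \<le> (1+C1)*mu" using Fc[of i] by (simp add: algebra_simps abs_le_iff)
        finally show ?thesis by (simp add: algebra_simps)
      qed
      hence xB: "x$i \<le> B*mu" by (rule smallb)
      have den: "x$i * hess x $ i $ i + l$i \<ge> c0/4"
      proof -
        have "\<bar>x$i * hess x $ i $ i\<bar> \<le> (B*mu)*Hb" unfolding abs_mult
          using xi xB hb[of i] Hb1 by (intro mult_mono) auto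
        thus ?thesis using m3 li by (simp add: algebra_simps abs_le_iff) 
      qed
      have eS: "\<bar>dxS grad hess (sigma*mu) x l i - dxN$i\<bar> \<le> 8*Hb*x$i*nd/c0"
        unfolding dxS_def using errS[OF den c0pos xi E1[of i] E2[of i] hvb[of i] hb[of i] dxNb[of i]] .
      have eC: "\<bar>dxC (sigma*mu) x l i - dxN$i\<bar> \<le> 2*x$i*nd/c0"
        unfolding dxC_def using errC[OF li c0pos xi E2[of i] dlNb[of i]] .
      have "8*Hb*x$i*nd/c0 \<le> (8*Hb+2)*x$i*nd/c0" "2*x$i*nd/c0 \<le> (8*Hb+2)*x$i*nd/c0"
        using xi nd0 c0pos Hb1 by (auto intro!: divide_right_mono mult_right_mono)
      hence "\<bar>dx$i - dxN$i\<bar> \<le> (8*Hb+2)*x$i*nd/c0" using dA True eS eC by auto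
      also have "\<dots> \<le> K*mu\<^sup>2" using gen xi xB by blast
      finally show ?thesis unfolding e1_def using True by (simp add: abs_minus_commute)
    qed
    have e2b: "\<bar>e2$i\<bar> \<le> K*mu\<^sup>2" for i
    proof (cases "xs$i > 0")
      case False thus ?thesis unfolding e2_def using Kmu0 by simp
    next
      case True
      have xi: "x$i \<ge> c0/2" using Ixs[OF True] xcomp[of i] by linarith
      have li: "l$i \<ge> 0" using lp by (simp add: less_imp_le)
      have "l$i * c0 \<le> 2*(1+C1)*mu"
      proof -
        have "l$i*(c0/2) \<le> l$i*x$i" using xi li by (intro mult_left_mono) auto
        also have "\<dots> \<le> (1+C1)*mu" using Fc[of i] by (simp add: algebra_simps abs_le_iff)
        finally show ?thesis by (simp add: algebra_simps)
      qed
      hence lB: "l$i \<le> B*mu" by (rule smallb)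
      have E2': "x$i*dlN$i + l$i*dxN$i = sigma*mu - x$i*l$i" using E2[of i] by (simp add: algebra_simps)
      have eC: "\<bar>dlC (sigma*mu) x l i - dlN$i\<bar> \<le> 2*l$i*nd/c0"
        unfolding dlC_def using errC[OF xi c0pos li E2' dxNb[of i]] .
      have "2*l$i*nd/c0 \<le> (8*Hb+2)*l$i*nd/c0"
        using li nd0 c0pos Hb1 by (auto intro!: divide_right_mono mult_right_mono)
      hence "\<bar>dl$i - dlN$i\<bar> \<le> (8*Hb+2)*l$i*nd/c0" using dI True eC by auto
      also have "\<dots> \<le> K*mu\<^sup>2" using gen li lB by blast
      finally show ?thesis unfolding e2_def using True by (simp add: abs_minus_commute)
    qed
    have "norm (e1, e2) \<le> norm e1 + norm e2" by (rule norm_Pair_le)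
    also have "\<dots> \<le> ?N*(K*mu\<^sup>2) + ?N*(K*mu\<^sup>2)"
      using norm_vec_bound[of e1, OF e1b] norm_vec_bound[of e2, OF e2b] by linarith
    also have "\<dots> = Q*mu\<^sup>2" unfolding Q_def by simp
    also have "\<dots> \<le> C8 * mu powr gamma"
    proof -
      have g2: "2 - gamma > 0" using gamma by simp
      have "mu \<le> (C8/(Q+1)) powr (1/(2-gamma))" using mu unfolding mubar_def by simp
      hence "mu powr (2-gamma) \<le> ((C8/(Q+1)) powr (1/(2-gamma))) powr (2-gamma)"
        using mu g2 by (intro powr_mono2) auto
      also have "\<dots> = C8/(Q+1)" unfolding powr_powr using g2 C8 Q0 by simp
      finally have pm: "mu powr (2-gamma) \<le> C8/(Q+1)" .
      have "mu\<^sup>2 = mu powr gamma * mu powr (2-gamma)"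
        using mu powr_realpow[of mu 2] by (simp add: powr_add[symmetric])
      hence "Q*mu\<^sup>2 = mu powr gamma * (Q * mu powr (2-gamma))" by simp
      also have "\<dots> \<le> mu powr gamma * (Q * (C8/(Q+1)))"
        using pm Q0 by (intro mult_left_mono) auto
      also have "Q * (C8/(Q+1)) \<le> C8" using Q0 C8 by (simp add: field_simps)
      hence "mu powr gamma * (Q * (C8/(Q+1))) \<le> mu powr gamma * C8" by (intro mult_left_mono) auto
      finally show ?thesis by (simp add: algebra_simps)
    qed
    also have "\<dots> \<le> norm ((\<chi> i. if xs$i = 0 then dxN$i else 0, \<chi> i. if xs$i > 0 then dlN$i else 0)
               :: (real^'n) \<times> (real^'n))" using big .
    finally have le: "norm (e1, e2) \<le> norm ((\<chi> i. if xs$i = 0 then dxN$i else 0, \<chi> i. if xs$i > 0 then dlN$i else 0)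
               :: (real^'n) \<times> (real^'n))" .
    have "norm (dxN - dx, dlN - dl) \<le> norm (dxN, dlN)"
      using part dA dI le unfolding e1_def e2_def by (intro final_norm) auto
    thus ?thesis by simp
  qed
  show ?thesis
    apply (rule exI[of _ rho])
    apply (intro conjI rho_pos exI[of _ mubar] mubar_pos mubar_le allI impI)
    apply (rule key)
    apply auto
    done
qed

end
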